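(* For any DRC-semigroup $S$, the category $\mathcal C(S)$ is a biordered category under the orders $\le_l,\le_r$ defined by $a\le_l b\iff a=pb$ for some $p\in\mathbf P(S)$ with $p\le D(b)$, and $a\le_r b\iff a=bq$ for some $q\in\mathbf P(S)$ with $q\le R(b)$; its left and right restrictions are ${}_p\lfloor a=pa$ ($p\le D(a)$) and $a\rfloor_q=aq$ ($q\le R(a)$).
   Context: A DRC-semigroup is $(S,\cdot,D,R)$, $(S,\cdot)$ a semigroup, $D,R:S\to S$ with, for all $a,b$: $D(a)a=a$, $aR(a)=a$; $D(ab)=D(aD(b))$, $R(ab)=R(R(a)b)$; $D(ab)=D(a)D(ab)D(a)$, $R(ab)=R(b)R(ab)R(b)$; $R(D(a))=D(a)$, $D(R(a))=R(a)$. Projections: $\mathbf P(S)=\{D(a):a\in S\}$, partially ordered by $p\le q\iff p=pq=qp$. The small category $\mathcal C(S)$ has morphism set $S$, object (identity) set $\mathbf P(S)$, domain $\mathbf d(a)=D(a)$, codomain $\mathbf r(a)=R(a)$, and composition $a\circ b=ab$ defined when $R(a)=D(b)$. A small category is identified with its morphisms, and objects with identities ($v\mathcal C$); $a\circ b$ is defined iff $\mathbf r(a)=\mathbf d(b)$. A left-ordered category is $(\mathcal C,\le)$ with a partial order such that: $a\le b\Rightarrow\mathbf d(a)\le\mathbf d(b)$, $\mathbf r(a)\le\mathbf r(b)$; if $a\le b$, $c\le c'$, $\mathbf r(a)=\mathbf d(c)$, $\mathbf r(b)=\mathbf d(c')$ then $a\circ c\le b\circ c'$; for every object $p\le\mathbf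 d(a)$ there is a unique $u\le a$ with $\mathbf d(u)=p$ (the left restriction ${}_p\lfloor a$). A right-ordered category is defined dually (unique $v\le a$ with $\mathbf r(v)=q$ for each object $q\le\mathbf r(a)$, denoted $a\rfloor_q$). A biordered category is $(\mathcal C,\le_l,\le_r)$ with $(\mathcal C,\le_l)$ left-ordered, $(\mathcal C,\le_r)$ right-ordered, and $\le_l,\le_r$ restricting to the same order on objects. *)

theory Defs
  imports Main
begin

definition DRC_semigroup :: "('a::semigroup_mult \<Rightarrow> 'a) \<Rightarrow> ('a \<Rightarrow> 'a) \<Rightarrow> bool" where
  "DRC_semigroup D R \<longleftrightarrow>
     (\<forall>a. D a * a = a) \<and> (\<forall>a. a * R a = a) \<and>
     (\<forall>a b. D (a * b) = D (a * D b)) \<and> (\<forall>a b. R (a * b) = R (R a * b)) \<and>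
     (\<forall>a b. D (a * b) = D a * D (a * b) * D a) \<and>
     (\<forall>a b. R (a * b) = R b * R (a * b) * R b) \<and>
     (\<forall>a. R (D a) = D a) \<and> (\<forall>a. D (R a) = R a)"

definition projections :: "('a \<Rightarrow> 'a) \<Rightarrow> 'a set" where
  "projections D = range D"

definition proj_le :: "'a::semigroup_mult \<Rightarrow> 'a \<Rightarrow> bool" where
  "proj_le p q \<longleftrightarrow> p = p * q \<and> p = q * p"

definition drc_le_l :: "('a::semigroup_mult \<Rightarrow> 'a) \<Rightarrow> 'a \<Rightarrow> 'a \<Rightarrow> bool" where
  "drc_le_l D a b \<longleftrightarrow> (\<exists>p \<in> projections D. proj_le p (D b) \<and> a = p * b)"

definition drc_le_r :: "('a::semigroup_mult \<Rightarrow> 'a) \<Rightarrow> ('a \<Rightarrow> 'a) \<Rightarrow> 'a \<Rightarrow> 'a \<Rightarrow> bool" where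
  "drc_le_r D R a b \<longleftrightarrow> (\<exists>q \<in> projections D. proj_le q (R b) \<and> a = b * q)"

text \<open>A small category on morphism set C with domain dd, codomain rr and composition cmp;
  cmp a b is meaningful (defined) exactly when rr a = dd b.  Objects are identified
  with identity morphisms.\<close>
definition small_category ::
  "'a set \<Rightarrow> ('a \<Rightarrow> 'a) \<Rightarrow> ('a \<Rightarrow> 'a) \<Rightarrow> ('a \<Rightarrow> 'a \<Rightarrow> 'a) \<Rightarrow> bool" where
  "small_category C dd rr cmp \<longleftrightarrow>
     (\<forall>a\<in>C. dd a \<in> C \<and> rr a \<in> C \<and>
              dd (dd a) = dd a \<and> rr (dd a) = dd a \<and>
              dd (rr a) = rr a \<and> rr (rr a) = rr a \<and>
              cmp (dd a) a = a \<and> cmp a (rr a) = a) \<and>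
     (\<forall>a\<in>C. \<forall>b\<in>C. rr a = dd b \<longrightarrow>
              cmp a b \<in> C \<and> dd (cmp a b) = dd a \<and> rr (cmp a b) = rr b) \<and>
     (\<forall>a\<in>C. \<forall>b\<in>C. \<forall>c\<in>C. rr a = dd b \<longrightarrow> rr b = dd c \<longrightarrow>
              cmp (cmp a b) c = cmp a (cmp b c))"

definition cat_objects :: "'a set \<Rightarrow> ('a \<Rightarrow> 'a) \<Rightarrow> 'a set" where
  "cat_objects C dd = {e \<in> C. dd e = e}"

definition partial_order_on_set :: "'a set \<Rightarrow> ('a \<Rightarrow> 'a \<Rightarrow> bool) \<Rightarrow> bool" where
  "partial_order_on_set C le \<longleftrightarrow>
     (\<forall>a b. le a b \<longrightarrow> a \<in> C \<and> b \<in> C) \<and>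
     (\<forall>a\<in>C. le a a) \<and>
     (\<forall>a\<in>C. \<forall>b\<in>C. le a b \<longrightarrow> le b a \<longrightarrow> a = b) \<and>
     (\<forall>a\<in>C. \<forall>b\<in>C. \<forall>c\<in>C. le a b \<longrightarrow> le b c \<longrightarrow> le a c)"

definition ordered_category_core ::
  "'a set \<Rightarrow> ('a \<Rightarrow> 'a) \<Rightarrow> ('a \<Rightarrow> 'a) \<Rightarrow> ('a \<Rightarrow> 'a \<Rightarrow> 'a) \<Rightarrow> ('a \<Rightarrow> 'a \<Rightarrow> bool) \<Rightarrow> bool" where
  "ordered_category_core C dd rr cmp le \<longleftrightarrow>
     small_category C dd rr cmp \<and> partial_order_on_set C le \<and>
     (\<forall>a b. le a b \<longrightarrow> le (dd a) (dd b) \<and> le (rr a) (rr b)) \<and>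
     (\<forall>a b c c'. le a b \<longrightarrow> le c c' \<longrightarrow> rr a = dd c \<longrightarrow> rr b = dd c' \<longrightarrow>
                 le (cmp a c) (cmp b c'))"

definition left_ordered_category ::
  "'a set \<Rightarrow> ('a \<Rightarrow> 'a) \<Rightarrow> ('a \<Rightarrow> 'a) \<Rightarrow> ('a \<Rightarrow> 'a \<Rightarrow> 'a) \<Rightarrow> ('a \<Rightarrow> 'a \<Rightarrow> bool) \<Rightarrow> bool" where
  "left_ordered_category C dd rr cmp le \<longleftrightarrow>
     ordered_category_core C dd rr cmp le \<and>
     (\<forall>a\<in>C. \<forall>p\<in>cat_objects C dd. le p (dd a) \<longrightarrow> (\<exists>!u. le u a \<and> dd u = p))"

definition right_ordered_category ::
  "'a set \<Rightarrow> ('a \<Rightarrow> 'a) \<Rightarrow> ('a \<Rightarrow> 'a) \<Rightarrow> ('a \<Rightarrow> 'a \<Rightarrow> 'a) \<Rightarrow> ('a \<Rightarrow> 'a \<Rightarrow> bool) \<Rightarrow> bool" where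
  "right_ordered_category C dd rr cmp le \<longleftrightarrow>
     ordered_category_core C dd rr cmp le \<and>
     (\<forall>a\<in>C. \<forall>q\<in>cat_objects C dd. le q (rr a) \<longrightarrow> (\<exists>!v. le v a \<and> rr v = q))"

definition biordered_category ::
  "'a set \<Rightarrow> ('a \<Rightarrow> 'a) \<Rightarrow> ('a \<Rightarrow> 'a) \<Rightarrow> ('a \<Rightarrow> 'a \<Rightarrow> 'a)
     \<Rightarrow> ('a \<Rightarrow> 'a \<Rightarrow> bool) \<Rightarrow> ('a \<Rightarrow> 'a \<Rightarrow> bool) \<Rightarrow> bool" where
  "biordered_category C dd rr cmp le_l le_r \<longleftrightarrow>
     left_ordered_category C dd rr cmp le_l \<and>
     right_ordered_category C dd rr cmp le_r \<and>
     (\<forall>p\<in>cat_objects C dd. \<forall>q\<in>cat_objects C dd. le_l p q \<longleftrightarrow> le_r p q)"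

definition left_restriction :: "('a \<Rightarrow> 'a) \<Rightarrow> ('a \<Rightarrow> 'a \<Rightarrow> bool) \<Rightarrow> 'a \<Rightarrow> 'a \<Rightarrow> 'a" where
  "left_restriction dd le p a = (THE u. le u a \<and> dd u = p)"

definition right_restriction :: "('a \<Rightarrow> 'a) \<Rightarrow> ('a \<Rightarrow> 'a \<Rightarrow> bool) \<Rightarrow> 'a \<Rightarrow> 'a \<Rightarrow> 'a" where
  "right_restriction rr le a q = (THE v. le v a \<and> rr v = q)"

end

theory Submission
  imports Defs
begin

context
  fixes D R :: "'a::semigroup_mult \<Rightarrow> 'a"
  assumes drc: "DRC_semigroup D R"
begin

lemma A1: "D a * a = a" and A2: "a * R a = a" and A3: "D (a * b) = D (a * D b)"
  and A4: "R (a * b) = R (R a * b)" and A5: "D (a * b) = D a * D (a * b) * D a"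
  and A6: "R (a * b) = R b * R (a * b) * R b" and A7: "R (D a) = D a" and A8: "D (R a) = R a"
  using drc unfolding DRC_semigroup_def by blast+

lemma DD: "D (D a) = D a" by (metis A7 A8)
lemma RR: "R (R a) = R a" by (metis A7 A8)
lemma DDm: "D a * D a = D a" by (metis A1 DD)
lemma RRm: "R a * R a = R a" by (metis A2 RR)

lemma projD: "p \<in> projections D \<Longrightarrow> D p = p"
  unfolding projections_def using DD by auto
lemma projR: "p \<in> projections D \<Longrightarrow> R p = p"
  unfolding projections_def using A7 by auto
lemma projI: "D p = p \<Longrightarrow> p \<in> projections D"
  unfolding projections_def by (metis rangeI)
lemma projRI: "R a \<in> projections D"
  unfolding projections_def by (metis A8 rangeI)
lemma projDI: "D a \<in> projections D"
  unfolding projections_def by (metis rangeI)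

lemma L3: "proj_le (D (a * b)) (D a)"
proof -
  have e: "D (a * b) = D a * D (a * b) * D a" by (rule A5)
  have "D (a * b) * D a = D (a * b)"
    by (metis e DDm mult.assoc)
  moreover have "D a * D (a * b) = D (a * b)"
    by (metis e DDm mult.assoc)
  ultimately show ?thesis unfolding proj_le_def by simp
qed

lemma L4: "proj_le (R (a * b)) (R b)"
proof -
  have e: "R (a * b) = R b * R (a * b) * R b" by (rule A6)
  have "R (a * b) * R b = R (a * b)"
    by (metis e RRm mult.assoc)
  moreover have "R b * R (a * b) = R (a * b)"
    by (metis e RRm mult.assoc)
  ultimately show ?thesis unfolding proj_le_def by simp
qed

lemma L5: "p \<in> projections D \<Longrightarrow> proj_le p (D b) \<Longrightarrow> D (p * b) = p"
  unfolding proj_le_def by (metis A3 projD)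

lemma L6: "q \<in> projections D \<Longrightarrow> proj_le q (R b) \<Longrightarrow> R (b * q) = q"
  unfolding proj_le_def by (metis A4 projR)

lemma cat: "small_category UNIV D R (*)"
  unfolding small_category_def
  by (auto simp: DD RR A7 A8 A1 A2 mult.assoc) (metis A3 A2, metis A4 A1)

lemma ple_trans: "proj_le p q \<Longrightarrow> proj_le q r \<Longrightarrow> proj_le p r"
  unfolding proj_le_def by (metis mult.assoc)

lemma pol: "partial_order_on_set UNIV (drc_le_l D)"
  unfolding partial_order_on_set_def
proof (intro conjI ballI allI impI)
  fix a show "drc_le_l D a a" unfolding drc_le_l_def proj_le_def
    using projDI A1 DDm by metis
next
  fix a b assume h1: "drc_le_l D a b" and h2: "drc_le_l D b a"
  then obtain p p' where p: "p \<in> projections D" "proj_le p (D b)" "a = p * b"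
    and p': "p' \<in> projections D" "proj_le p' (D a)" "b = p' * a"
    unfolding drc_le_l_def by blast
  have "D a = p" using L5 p by blast
  moreover have "D b = p'" using L5 p' by blast
  ultimately have "p = p'" using p p' unfolding proj_le_def by metis
  then show "a = b" using p \<open>D b = p'\<close> A1 by metis
next
  fix a b c assume h1: "drc_le_l D a b" and h2: "drc_le_l D b c"
  then obtain p p' where p: "p \<in> projections D" "proj_le p (D b)" "a = p * b"
    and p': "p' \<in> projections D" "proj_le p' (D c)" "b = p' * c"
    unfolding drc_le_l_def by blast
  have "D b = p'" using L5 p' by blast
  then have "proj_le p (D c)" using p p' ple_trans by metis
  moreover have "a = p * c" using p p' \<open>D b = p'\<close> unfolding proj_le_def by (metis mult.assoc)
  ultimately show "drc_le_l D a c" using p unfolding drc_le_l_def by blast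
qed auto

lemma por: "partial_order_on_set UNIV (drc_le_r D R)"
  unfolding partial_order_on_set_def
proof (intro conjI ballI allI impI)
  fix a show "drc_le_r D R a a" unfolding drc_le_r_def proj_le_def
    using projRI A2 RRm by metis
next
  fix a b assume h1: "drc_le_r D R a b" and h2: "drc_le_r D R b a"
  then obtain p p' where p: "p \<in> projections D" "proj_le p (R b)" "a = b * p"
    and p': "p' \<in> projections D" "proj_le p' (R a)" "b = a * p'"
    unfolding drc_le_r_def by blast
  have "R a = p" using L6 p by blast
  moreover have "R b = p'" using L6 p' by blast
  ultimately have "p = p'" using p p' unfolding proj_le_def by metis
  then show "a = b" using p \<open>R b = p'\<close> A2 by metis
next
  fix a b c assume h1: "drc_le_r D R a b" and h2: "drc_le_r D R b c"
  then obtain p p' where p: "p \<in> projections D" "proj_le p (R b)" "a = b * p"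
    and p': "p' \<in> projections D" "proj_le p' (R c)" "b = c * p'"
    unfolding drc_le_r_def by blast
  have "R b = p'" using L6 p' by blast
  then have "proj_le p (R c)" using p p' ple_trans by metis
  moreover have "a = c * p" using p p' \<open>R b = p'\<close> unfolding proj_le_def by (metis mult.assoc)
  ultimately show "drc_le_r D R a c" using p unfolding drc_le_r_def by blast
qed auto

lemma corel: "ordered_category_core UNIV D R (*) (drc_le_l D)"
  unfolding ordered_category_core_def
proof (intro conjI allI impI cat pol)
  fix a b assume "drc_le_l D a b"
  then obtain p where p: "p \<in> projections D" "proj_le p (D b)" "a = p * b"
    unfolding drc_le_l_def by blast
  have Da: "D a = p" using L5 p by blast
  show "drc_le_l D (D a) (D b)" unfolding drc_le_l_def
    using p Da DD unfolding proj_le_def by metis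
  have "proj_le (R a) (R b)" using L4[of p b] p by simp
  then show "drc_le_l D (R a) (R b)" unfolding drc_le_l_def
    using projRI[of a] A8[of b] unfolding proj_le_def by metis
next
  fix a b c c' assume h1: "drc_le_l D a b" and h2: "drc_le_l D c c'"
    and e1: "R a = D c" and e2: "R b = D c'"
  then obtain p q where p: "p \<in> projections D" "proj_le p (D b)" "a = p * b"
    and q: "q \<in> projections D" "proj_le q (D c')" "c = q * c'"
    unfolding drc_le_l_def by blast
  have "D c = q" using L5 q by blast
  have "a * c = p * b * c'"
    using p q e1 \<open>D c = q\<close> A2 by (metis mult.assoc)
  moreover have "D (b * c') = D b" using e2 A3 A2 by metis
  ultimately show "drc_le_l D (a * c) (b * c')" unfolding drc_le_l_def
    using p by (metis mult.assoc)
qed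

lemma corer: "ordered_category_core UNIV D R (*) (drc_le_r D R)"
  unfolding ordered_category_core_def
proof (intro conjI allI impI cat por)
  fix a b assume "drc_le_r D R a b"
  then obtain p where p: "p \<in> projections D" "proj_le p (R b)" "a = b * p"
    unfolding drc_le_r_def by blast
  have Ra: "R a = p" using L6 p by blast
  show "drc_le_r D R (R a) (R b)" unfolding drc_le_r_def
    using p Ra RR unfolding proj_le_def by metis
  show "drc_le_r D R (D a) (D b)" unfolding drc_le_r_def
    using L3[of b p] p projDI A7 unfolding proj_le_def by metis
next
  fix a b c c' assume h1: "drc_le_r D R a b" and h2: "drc_le_r D R c c'"
    and e1: "R a = D c" and e2: "R b = D c'"
  then obtain p q where p: "p \<in> projections D" "proj_le p (R b)" "a = b * p"
    and q: "q \<in> projections D" "proj_le q (R c')" "c = c' * q"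
    unfolding drc_le_r_def by blast
  have "R a = p" using L6 p by blast
  have "a * c = b * c' * q"
    using p q e1 \<open>R a = p\<close> A1 by (metis mult.assoc)
  moreover have "R (b * c') = R c'" using e2 A4 A1 by metis
  ultimately show "drc_le_r D R (a * c) (b * c')" unfolding drc_le_r_def
    using q by (metis mult.assoc)
qed

lemma uniql: "p \<in> projections D \<Longrightarrow> proj_le p (D a) \<Longrightarrow>
   drc_le_l D u a \<and> D u = p \<longleftrightarrow> u = p * a"
proof
  assume p: "p \<in> projections D" "proj_le p (D a)" and h: "drc_le_l D u a \<and> D u = p"
  then obtain r where r: "r \<in> projections D" "proj_le r (D a)" "u = r * a"
    unfolding drc_le_l_def by blast
  have "D u = r" using L5[OF r(1) r(2)] r(3) by simp
  then show "u = p * a" using h r(3) by simp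
next
  assume p: "p \<in> projections D" "proj_le p (D a)" and h: "u = p * a"
  have "D u = p" using L5[OF p] h by simp
  then show "drc_le_l D u a \<and> D u = p" using p h unfolding drc_le_l_def by blast
qed

lemma uniqr: "q \<in> projections D \<Longrightarrow> proj_le q (R a) \<Longrightarrow>
   drc_le_r D R v a \<and> R v = q \<longleftrightarrow> v = a * q"
proof
  assume p: "q \<in> projections D" "proj_le q (R a)" and h: "drc_le_r D R v a \<and> R v = q"
  then obtain r where r: "r \<in> projections D" "proj_le r (R a)" "v = a * r"
    unfolding drc_le_r_def by blast
  have "R v = r" using L6[OF r(1) r(2)] r(3) by simp
  then show "v = a * q" using h r(3) by simp
next
  assume p: "q \<in> projections D" "proj_le q (R a)" and h: "v = a * q"
  have "R v = q" using L6[OF p] h by simp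
  then show "drc_le_r D R v a \<and> R v = q" using p h unfolding drc_le_r_def by blast
qed

lemma objs: "cat_objects UNIV D = projections D"
  unfolding cat_objects_def using projD projI by auto

lemma leftok: "left_ordered_category UNIV D R (*) (drc_le_l D)"
  unfolding left_ordered_category_def
proof (intro conjI corel ballI impI)
  fix a p assume h1: "p \<in> cat_objects UNIV D" and h2: "drc_le_l D p (D a)"
  have pp: "p \<in> projections D" using h1 objs by simp
  obtain r where r: "r \<in> projections D" "proj_le r (D (D a))" "p = r * D a"
    using h2 unfolding drc_le_l_def by blast
  have "proj_le p (D a)" using r DD unfolding proj_le_def by metis
  then have e: "\<And>u. (drc_le_l D u a \<and> D u = p) = (u = p * a)" using uniql[OF pp] by blast
  show "\<exists>!u. drc_le_l D u a \<and> D u = p" unfolding e by blast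
qed

lemma rightok: "right_ordered_category UNIV D R (*) (drc_le_r D R)"
  unfolding right_ordered_category_def
proof (intro conjI corer ballI impI)
  fix a q assume h1: "q \<in> cat_objects UNIV D" and h2: "drc_le_r D R q (R a)"
  have pp: "q \<in> projections D" using h1 objs by simp
  obtain r where r: "r \<in> projections D" "proj_le r (R (R a))" "q = R a * r"
    using h2 unfolding drc_le_r_def by blast
  have "proj_le q (R a)" using r RR unfolding proj_le_def by metis
  then have e: "\<And>v. (drc_le_r D R v a \<and> R v = q) = (v = a * q)" using uniqr[OF pp] by blast
  show "\<exists>!v. drc_le_r D R v a \<and> R v = q" unfolding e by blast
qed

lemma objeq: "p \<in> cat_objects UNIV D \<Longrightarrow> q \<in> cat_objects UNIV D \<Longrightarrow>
   drc_le_l D p q \<longleftrightarrow> drc_le_r D R p q"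
  unfolding drc_le_l_def drc_le_r_def objs proj_le_def using projD projR by metis

end

theorem proposition3p10:
  fixes D R :: "'a::semigroup_mult \<Rightarrow> 'a"
  assumes "DRC_semigroup D R"
  shows "biordered_category UNIV D R (*) (drc_le_l D) (drc_le_r D R)
       \<and> (\<forall>a. \<forall>p\<in>projections D. proj_le p (D a) \<longrightarrow>
             left_restriction D (drc_le_l D) p a = p * a)
       \<and> (\<forall>a. \<forall>q\<in>projections D. proj_le q (R a) \<longrightarrow>
             right_restriction R (drc_le_r D R) a q = a * q)"
proof -
  show ?thesis
    unfolding biordered_category_def left_restriction_def right_restriction_def
    using leftok[OF assms] rightok[OF assms] objeq[OF assms] uniql[OF assms] uniqr[OF assms]
    by auto
qed

end
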